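(* Let $(\Vdash_{\mathcal M},\Vdash)$ be a monadic realizability relation for a syntactic monad $\mathcal M=(\mathsf T,\mathsf{unit},\mathsf{star},\mathsf{merge})$. Let $A_1,\dots,A_k,B$ be closed formulas and $r:|A_1|\to\dots\to|A_k|\to\|B\|$ a term such that $r\,p_1\cdots p_k\Vdash_{\mathcal M}B$ for all $p_1:|A_1|,\dots,p_k:|A_k|$ with $p_i\Vdash A_i$. Then $\mathsf{star}^k\,r\,q_1\cdots q_k\Vdash_{\mathcal M}B$ for all $q_1:\|A_1\|,\dots,q_k:\|A_k\|$ with $q_i\Vdash_{\mathcal M}A_i$.
   Context: System $T'$: simply typed $\lambda$-calculus with types built from atomic types (including $\mathsf{Unit},\mathsf{Nat}$) by $\to,\times,+$, constants $\star$, pairing $\langle\cdot,\cdot\rangle$, projections $\pi_1,\pi_2$, injections $\mathrm{inl},\mathrm{inr}$, $\mathrm{case}$, $0$, $\mathrm{succ}$ and a bounded course-of-values recursor, with the usual $\beta$, projection and case reductions; $t\leadsto u$ means $t$ reduces to $u$. $\bar n$ denotes the numeral for $n$. Syntactic monad: $\mathsf T$ a map on types, closed terms $\mathsf{unit}_X:X\to\mathsf TX$, $\mathsf{star}_{X,Y}:(X\to\mathsf TY)\to\mathsf TX\to\mathsf TY$, $\mathsf{merge}_{X,Y}:\mathsf TX\to\mathsf TY\to\mathsf T(X\times Y)$ with $\mathsf{star}\,\mathsf{unit}\,a\leadsto a$, $\mathsf{star}\,f(\mathsf{unit}\,x)\leadsto fx$, $\mathsf{merge}(\mathsf{unit}\,x)(\mathsf{unit}\,y)\leadsto\mathsf{unit}\langle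 x,y\rangle$. $\mathsf{star}^0=\lambda f.f$, $\mathsf{star}^1=\mathsf{star}$, $\mathsf{star}^{k+2}=\lambda f\lambda x\lambda y.\,\mathsf{star}^{k+1}(\lambda z.f(\pi_1z)(\pi_2z))(\mathsf{merge}\,x\,y)$. Formulas are first-order arithmetic formulas with decidable atomic predicates ($\bot$ atomic, never true). Types: $\|A\|=\mathsf T|A|$, $|P|=\mathsf{Unit}$ ($P$ atomic), $|B\wedge C|=|B|\times|C|$, $|B\vee C|=|B|+|C|$, $|\exists xB|=\mathsf{Nat}\times|B|$, $|B\to C|=|B|\to\|C\|$, $|\forall xB|=\mathsf{Nat}\to\|B\|$. A monadic realizability relation is a pair: $\Vdash_{\mathcal M}$ between terms of type $\|A\|$ and closed $A$, and $\Vdash$ between terms of type $|A|$ and closed $A$, with: $r\Vdash P$ iff $r\leadsto\star$ and $P$ true; $r\Vdash B\wedge C$ iff $\pi_1r\Vdash B$ and $\pi_2r\Vdash C$; $r\Vdash B\vee C$ iff $r\leadsto\mathrm{inl}\,a$ with $a\Vdash B$ or $r\leadsto\mathrm{inr}\,b$ with $b\Vdash C$; $r\Vdash B\to C$ iff $rp\Vdash_{\mathcal M}C$ for all $p\Vdash B$; $r\Vdash\forall xB$ iff $r\bar n\Vdash_{\mathcal M}B[x:=\bar n]$ for all $n$; $r\Vdash\exists xB$ iff $\pi_2r\Vdash B[x:=\pi_1r]$; and (MR1) $r\Vdash A\Rightarrow\mathsf{unit}\,r\Vdash_{\mathcal M}A$; (MR2) $r\Vdash B\to C\Rightarrow\mathsf{star}\,r\,p\Vdash_{\mathcal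 M}C$ for all $p\Vdash_{\mathcal M}B$; (MR3) $p\Vdash_{\mathcal M}B$, $q\Vdash_{\mathcal M}C\Rightarrow\mathsf{merge}\,p\,q\Vdash_{\mathcal M}B\wedge C$. *)

theory Defs
  imports Main
begin

section \<open>The calculus T' (de Bruijn syntax)\<close>

datatype ty = TAtom nat | TUnit | TNat | TArr ty ty | TProd ty ty | TSum ty ty

text \<open>Bound variables are de Bruijn indices.  Extra constants of type 'c
  (e.g. the bounded course-of-values recursor) are allowed; their types are given
  by a typing function and their reduction rules by an extra root contraction
  relation delta.  Inl U a : X + U, Inr X b : X + U.  In Case t s u the branches
  s and u bind variable 0.\<close>
datatype 'c trm =
    Var nat
  | Lam ty "'c trm"
  | App "'c trm" "'c trm"
  | UnitC
  | Pair "'c trm" "'c trm"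
  | Fst "'c trm"
  | Snd "'c trm"
  | Inl ty "'c trm"
  | Inr ty "'c trm"
  | Case "'c trm" "'c trm" "'c trm"
  | Zero
  | Succ "'c trm"
  | Const 'c

primrec lift :: "nat \<Rightarrow> 'c trm \<Rightarrow> 'c trm" where
  "lift k (Var i) = (if i < k then Var i else Var (Suc i))"
| "lift k (Lam T b) = Lam T (lift (Suc k) b)"
| "lift k (App s t) = App (lift k s) (lift k t)"
| "lift k UnitC = UnitC"
| "lift k (Pair s t) = Pair (lift k s) (lift k t)"
| "lift k (Fst t) = Fst (lift k t)"
| "lift k (Snd t) = Snd (lift k t)"
| "lift k (Inl T t) = Inl T (lift k t)"
| "lift k (Inr T t) = Inr T (lift k t)"
| "lift k (Case t s u) = Case (lift k t) (lift (Suc k) s) (lift (Suc k) u)"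
| "lift k Zero = Zero"
| "lift k (Succ t) = Succ (lift k t)"
| "lift k (Const c) = Const c"

text \<open>subst t k s: substitute s for index k in t (and decrement larger indices).\<close>
primrec subst :: "'c trm \<Rightarrow> nat \<Rightarrow> 'c trm \<Rightarrow> 'c trm" where
  "subst (Var i) k s = (if i < k then Var i else if i = k then s else Var (i - 1))"
| "subst (Lam T b) k s = Lam T (subst b (Suc k) (lift 0 s))"
| "subst (App t u) k s = App (subst t k s) (subst u k s)"
| "subst UnitC k s = UnitC"
| "subst (Pair t u) k s = Pair (subst t k s) (subst u k s)"
| "subst (Fst t) k s = Fst (subst t k s)"
| "subst (Snd t) k s = Snd (subst t k s)"
| "subst (Inl T t) k s = Inl T (subst t k s)"
| "subst (Inr T t) k s = Inr T (subst t k s)"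
| "subst (Case t u v) k s =
     Case (subst t k s) (subst u (Suc k) (lift 0 s)) (subst v (Suc k) (lift 0 s))"
| "subst Zero k s = Zero"
| "subst (Succ t) k s = Succ (subst t k s)"
| "subst (Const c) k s = Const c"

inductive typing :: "('c \<Rightarrow> ty) \<Rightarrow> ty list \<Rightarrow> 'c trm \<Rightarrow> ty \<Rightarrow> bool"
  for ctyp :: "'c \<Rightarrow> ty" where
  T_Var: "i < length \<Gamma> \<Longrightarrow> \<Gamma> ! i = T \<Longrightarrow> typing ctyp \<Gamma> (Var i) T"
| T_Lam: "typing ctyp (T # \<Gamma>) b U \<Longrightarrow> typing ctyp \<Gamma> (Lam T b) (TArr T U)"
| T_App: "typing ctyp \<Gamma> s (TArr T U) \<Longrightarrow> typing ctyp \<Gamma> t T \<Longrightarrow> typing ctyp \<Gamma> (App s t) U"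
| T_Unit: "typing ctyp \<Gamma> UnitC TUnit"
| T_Pair: "typing ctyp \<Gamma> s T \<Longrightarrow> typing ctyp \<Gamma> t U \<Longrightarrow> typing ctyp \<Gamma> (Pair s t) (TProd T U)"
| T_Fst: "typing ctyp \<Gamma> t (TProd T U) \<Longrightarrow> typing ctyp \<Gamma> (Fst t) T"
| T_Snd: "typing ctyp \<Gamma> t (TProd T U) \<Longrightarrow> typing ctyp \<Gamma> (Snd t) U"
| T_Inl: "typing ctyp \<Gamma> t T \<Longrightarrow> typing ctyp \<Gamma> (Inl U t) (TSum T U)"
| T_Inr: "typing ctyp \<Gamma> t U \<Longrightarrow> typing ctyp \<Gamma> (Inr T t) (TSum T U)"
| T_Case: "typing ctyp \<Gamma> t (TSum T U) \<Longrightarrow> typing ctyp (T # \<Gamma>) s V \<Longrightarrow>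
           typing ctyp (U # \<Gamma>) u V \<Longrightarrow> typing ctyp \<Gamma> (Case t s u) V"
| T_Zero: "typing ctyp \<Gamma> Zero TNat"
| T_Succ: "typing ctyp \<Gamma> t TNat \<Longrightarrow> typing ctyp \<Gamma> (Succ t) TNat"
| T_Const: "typing ctyp \<Gamma> (Const c) (ctyp c)"

inductive red :: "('c trm \<Rightarrow> 'c trm \<Rightarrow> bool) \<Rightarrow> 'c trm \<Rightarrow> 'c trm \<Rightarrow> bool"
  for delta :: "'c trm \<Rightarrow> 'c trm \<Rightarrow> bool" where
  R_beta: "red delta (App (Lam T b) a) (subst b 0 a)"
| R_fst: "red delta (Fst (Pair a b)) a"
| R_snd: "red delta (Snd (Pair a b)) b"
| R_inl: "red delta (Case (Inl U a) s u) (subst s 0 a)"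
| R_inr: "red delta (Case (Inr T a) s u) (subst u 0 a)"
| R_delta: "delta t t' \<Longrightarrow> red delta t t'"
| R_Lam: "red delta b b' \<Longrightarrow> red delta (Lam T b) (Lam T b')"
| R_App1: "red delta s s' \<Longrightarrow> red delta (App s t) (App s' t)"
| R_App2: "red delta t t' \<Longrightarrow> red delta (App s t) (App s t')"
| R_Pair1: "red delta s s' \<Longrightarrow> red delta (Pair s t) (Pair s' t)"
| R_Pair2: "red delta t t' \<Longrightarrow> red delta (Pair s t) (Pair s t')"
| R_Fst: "red delta t t' \<Longrightarrow> red delta (Fst t) (Fst t')"
| R_Snd: "red delta t t' \<Longrightarrow> red delta (Snd t) (Snd t')"
| R_Inl: "red delta t t' \<Longrightarrow> red delta (Inl U t) (Inl U t')"
| R_Inr: "red delta t t' \<Longrightarrow> red delta (Inr T t) (Inr T t')"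
| R_Case1: "red delta t t' \<Longrightarrow> red delta (Case t s u) (Case t' s u)"
| R_Case2: "red delta s s' \<Longrightarrow> red delta (Case t s u) (Case t s' u)"
| R_Case3: "red delta u u' \<Longrightarrow> red delta (Case t s u) (Case t s u')"
| R_Succ: "red delta t t' \<Longrightarrow> red delta (Succ t) (Succ t')"

definition reds :: "('c trm \<Rightarrow> 'c trm \<Rightarrow> bool) \<Rightarrow> 'c trm \<Rightarrow> 'c trm \<Rightarrow> bool" where
  "reds delta = (red delta)\<^sup>*\<^sup>*"

definition conv :: "('c trm \<Rightarrow> 'c trm \<Rightarrow> bool) \<Rightarrow> 'c trm \<Rightarrow> 'c trm \<Rightarrow> bool" where
  "conv delta = (\<lambda>t u. red delta t u \<or> red delta u t)\<^sup>*\<^sup>*"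

definition num :: "nat \<Rightarrow> 'c trm" where
  "num n = (Succ ^^ n) Zero"

fun arrows :: "ty list \<Rightarrow> ty \<Rightarrow> ty" where
  "arrows [] Y = Y"
| "arrows (X # Xs) Y = TArr X (arrows Xs Y)"

fun apps :: "'c trm \<Rightarrow> 'c trm list \<Rightarrow> 'c trm" where
  "apps t [] = t"
| "apps t (s # ss) = apps (App t s) ss"

section \<open>Syntactic monads\<close>

definition syn_monad ::
  "('c \<Rightarrow> ty) \<Rightarrow> ('c trm \<Rightarrow> 'c trm \<Rightarrow> bool) \<Rightarrow> (ty \<Rightarrow> ty) \<Rightarrow> (ty \<Rightarrow> 'c trm)
   \<Rightarrow> (ty \<Rightarrow> ty \<Rightarrow> 'c trm) \<Rightarrow> (ty \<Rightarrow> ty \<Rightarrow> 'c trm) \<Rightarrow> bool" where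
  "syn_monad ctyp delta Tm unitT starT mergeT \<longleftrightarrow>
     (\<forall>X. typing ctyp [] (unitT X) (TArr X (Tm X))) \<and>
     (\<forall>X Y. typing ctyp [] (starT X Y) (TArr (TArr X (Tm Y)) (TArr (Tm X) (Tm Y)))) \<and>
     (\<forall>X Y. typing ctyp [] (mergeT X Y) (TArr (Tm X) (TArr (Tm Y) (Tm (TProd X Y))))) \<and>
     (\<forall>\<Gamma> X a. typing ctyp \<Gamma> a (Tm X) \<longrightarrow>
        reds delta (App (App (starT X X) (unitT X)) a) a) \<and>
     (\<forall>\<Gamma> X Y f x. typing ctyp \<Gamma> f (TArr X (Tm Y)) \<longrightarrow> typing ctyp \<Gamma> x X \<longrightarrow>
        reds delta (App (App (starT X Y) f) (App (unitT X) x)) (App f x)) \<and>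
     (\<forall>\<Gamma> X Y x y. typing ctyp \<Gamma> x X \<longrightarrow> typing ctyp \<Gamma> y Y \<longrightarrow>
        reds delta (App (App (mergeT X Y) (App (unitT X) x)) (App (unitT Y) y))
                   (App (unitT (TProd X Y)) (Pair x y)))"

text \<open>star^k, at the types X1,...,Xk (list Xs) and result type Y:
  star^0 = \<lambda>f. f, star^1 = star, and
  star^(k+2) = \<lambda>f x y. star^(k+1) (\<lambda>z. f (\<pi>1 z) (\<pi>2 z)) (merge x y).\<close>
fun starK :: "(ty \<Rightarrow> ty) \<Rightarrow> (ty \<Rightarrow> ty \<Rightarrow> 'c trm) \<Rightarrow> (ty \<Rightarrow> ty \<Rightarrow> 'c trm)
              \<Rightarrow> ty list \<Rightarrow> ty \<Rightarrow> 'c trm" where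
  "starK Tm starT mergeT [] Y = Lam (Tm Y) (Var 0)"
| "starK Tm starT mergeT [X] Y = starT X Y"
| "starK Tm starT mergeT (X1 # X2 # Xs) Y =
     Lam (arrows (X1 # X2 # Xs) (Tm Y)) (Lam (Tm X1) (Lam (Tm X2)
       (App (App (starK Tm starT mergeT (TProd X1 X2 # Xs) Y)
                 (Lam (TProd X1 X2) (App (App (Var 3) (Fst (Var 0))) (Snd (Var 0)))))
            (App (App (mergeT X1 X2) (Var 1)) (Var 0)))))"

section \<open>First-order arithmetic formulas\<close>

datatype atm = AVar nat | AZero | ASuc atm | AAdd atm atm | AMul atm atm

text \<open>Atomic predicates are symbols of type 'p, interpreted by a (decidable)
  predicate on numbers; FBot is the atomic formula that is never true.\<close>
datatype 'p fm =
    FAtom 'p "atm list"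
  | FBot
  | FAnd "'p fm" "'p fm"
  | FOr "'p fm" "'p fm"
  | FImp "'p fm" "'p fm"
  | FAll nat "'p fm"
  | FEx nat "'p fm"

primrec avars :: "atm \<Rightarrow> nat set" where
  "avars (AVar x) = {x}"
| "avars AZero = {}"
| "avars (ASuc t) = avars t"
| "avars (AAdd s t) = avars s \<union> avars t"
| "avars (AMul s t) = avars s \<union> avars t"

primrec fv :: "'p fm \<Rightarrow> nat set" where
  "fv (FAtom p ts) = (\<Union>t\<in>set ts. avars t)"
| "fv FBot = {}"
| "fv (FAnd A B) = fv A \<union> fv B"
| "fv (FOr A B) = fv A \<union> fv B"
| "fv (FImp A B) = fv A \<union> fv B"
| "fv (FAll x A) = fv A - {x}"
| "fv (FEx x A) = fv A - {x}"

definition closed_fm :: "'p fm \<Rightarrow> bool" where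
  "closed_fm A \<longleftrightarrow> fv A = {}"

primrec anum :: "nat \<Rightarrow> atm" where
  "anum 0 = AZero"
| "anum (Suc n) = ASuc (anum n)"

primrec asubst :: "nat \<Rightarrow> nat \<Rightarrow> atm \<Rightarrow> atm" where
  "asubst x n (AVar y) = (if y = x then anum n else AVar y)"
| "asubst x n AZero = AZero"
| "asubst x n (ASuc t) = ASuc (asubst x n t)"
| "asubst x n (AAdd s t) = AAdd (asubst x n s) (asubst x n t)"
| "asubst x n (AMul s t) = AMul (asubst x n s) (asubst x n t)"

text \<open>fsubst x n A = A[x := numeral n] (substituting a closed term, no capture).\<close>
primrec fsubst :: "nat \<Rightarrow> nat \<Rightarrow> 'p fm \<Rightarrow> 'p fm" where
  "fsubst x n (FAtom p ts) = FAtom p (map (asubst x n) ts)"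
| "fsubst x n FBot = FBot"
| "fsubst x n (FAnd A B) = FAnd (fsubst x n A) (fsubst x n B)"
| "fsubst x n (FOr A B) = FOr (fsubst x n A) (fsubst x n B)"
| "fsubst x n (FImp A B) = FImp (fsubst x n A) (fsubst x n B)"
| "fsubst x n (FAll y A) = (if y = x then FAll y A else FAll y (fsubst x n A))"
| "fsubst x n (FEx y A) = (if y = x then FEx y A else FEx y (fsubst x n A))"

primrec aval :: "atm \<Rightarrow> nat" where
  "aval (AVar x) = 0"
| "aval AZero = 0"
| "aval (ASuc t) = Suc (aval t)"
| "aval (AAdd s t) = aval s + aval t"
| "aval (AMul s t) = aval s * aval t"

text \<open>|A| (tyA Tm A); ||A|| = Tm |A|.\<close>
primrec tyA :: "(ty \<Rightarrow> ty) \<Rightarrow> 'p fm \<Rightarrow> ty" where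
  "tyA Tm (FAtom p ts) = TUnit"
| "tyA Tm FBot = TUnit"
| "tyA Tm (FAnd B C) = TProd (tyA Tm B) (tyA Tm C)"
| "tyA Tm (FOr B C) = TSum (tyA Tm B) (tyA Tm C)"
| "tyA Tm (FEx x B) = TProd TNat (tyA Tm B)"
| "tyA Tm (FImp B C) = TArr (tyA Tm B) (Tm (tyA Tm C))"
| "tyA Tm (FAll x B) = TArr TNat (Tm (tyA Tm B))"

section \<open>Monadic realizability relations\<close>

text \<open>realM r A : r \<Vdash>_M A  (r closed of type ||A||, A closed);
  real r A : r \<Vdash> A  (r closed of type |A|, A closed).
  Terms are identified up to convertibility: both relations are invariant
  under conversion (among closed terms of the appropriate type).\<close>
definition monadic_real ::
  "('c \<Rightarrow> ty) \<Rightarrow> ('c trm \<Rightarrow> 'c trm \<Rightarrow> bool) \<Rightarrow> ('p \<Rightarrow> nat list \<Rightarrow> bool) \<Rightarrow> (ty \<Rightarrow> ty)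
   \<Rightarrow> (ty \<Rightarrow> 'c trm) \<Rightarrow> (ty \<Rightarrow> ty \<Rightarrow> 'c trm) \<Rightarrow> (ty \<Rightarrow> ty \<Rightarrow> 'c trm)
   \<Rightarrow> ('c trm \<Rightarrow> 'p fm \<Rightarrow> bool) \<Rightarrow> ('c trm \<Rightarrow> 'p fm \<Rightarrow> bool) \<Rightarrow> bool" where
  "monadic_real ctyp delta interp Tm unitT starT mergeT realM real \<longleftrightarrow>
     \<comment> \<open>the relations are between closed terms of the right type and closed formulas\<close>
     (\<forall>r A. real r A \<longrightarrow> closed_fm A \<and> typing ctyp [] r (tyA Tm A)) \<and>
     (\<forall>r A. realM r A \<longrightarrow> closed_fm A \<and> typing ctyp [] r (Tm (tyA Tm A))) \<and>
     \<comment> \<open>terms are considered up to conversion\<close>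
     (\<forall>r r' A. real r A \<longrightarrow> conv delta r r' \<longrightarrow> typing ctyp [] r' (tyA Tm A) \<longrightarrow> real r' A) \<and>
     (\<forall>r r' A. realM r A \<longrightarrow> conv delta r r' \<longrightarrow> typing ctyp [] r' (Tm (tyA Tm A)) \<longrightarrow> realM r' A) \<and>
     \<comment> \<open>defining clauses for \<Vdash>, for closed A and closed r of type |A|\<close>
     (\<forall>r A. closed_fm A \<longrightarrow> typing ctyp [] r (tyA Tm A) \<longrightarrow>
        (real r A \<longleftrightarrow>
          (case A of
             FAtom p ts \<Rightarrow> reds delta r UnitC \<and> interp p (map aval ts)
           | FBot \<Rightarrow> reds delta r UnitC \<and> False
           | FAnd B C \<Rightarrow> real (Fst r) B \<and> real (Snd r) C
           | FOr B C \<Rightarrow> (\<exists>a. reds delta r (Inl (tyA Tm C) a) \<and> real a B) \<or>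
                        (\<exists>b. reds delta r (Inr (tyA Tm B) b) \<and> real b C)
           | FImp B C \<Rightarrow> (\<forall>p. real p B \<longrightarrow> realM (App r p) C)
           | FAll x B \<Rightarrow> (\<forall>n. realM (App r (num n)) (fsubst x n B))
           | FEx x B \<Rightarrow> (\<exists>n. reds delta (Fst r) (num n) \<and> real (Snd r) (fsubst x n B))))) \<and>
     \<comment> \<open>(MR1)\<close>
     (\<forall>r A. real r A \<longrightarrow> realM (App (unitT (tyA Tm A)) r) A) \<and>
     \<comment> \<open>(MR2)\<close>
     (\<forall>r p B C. real r (FImp B C) \<longrightarrow> realM p B \<longrightarrow>
        realM (App (App (starT (tyA Tm B) (tyA Tm C)) r) p) C) \<and>
     \<comment> \<open>(MR3)\<close>
     (\<forall>p q B C. realM p B \<longrightarrow> realM q C \<longrightarrow>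
        realM (App (App (mergeT (tyA Tm B) (tyA Tm C)) p) q) (FAnd B C))"

end

theory Submission
  imports Defs
begin

lemma beta': "b' = subst b 0 a \<Longrightarrow> red delta (App (Lam T b) a) b'"
  using red.R_beta by simp

lemma typing_weaken:
  "typing ctyp \<Gamma> t T \<Longrightarrow> typing ctyp (\<Gamma> @ \<Delta>) t T"
proof (induction arbitrary: \<Delta> rule: typing.induct)
  case (T_Var i \<Gamma> T) then show ?case by (auto intro: typing.T_Var simp: nth_append)
next
  case (T_App \<Gamma> s T U t) then show ?case by (auto intro: typing.T_App)
next
  case (T_Fst \<Gamma> t T U) then show ?case by (auto intro: typing.T_Fst)
next
  case (T_Snd \<Gamma> t T U) then show ?case by (auto intro: typing.T_Snd)
next
  case (T_Case \<Gamma> t T U s V u) then show ?case by (auto intro: typing.T_Case)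
qed (auto intro: typing.intros)

lemma typing_closed0:
  "typing ctyp [] t T \<Longrightarrow> typing ctyp \<Gamma> t T"
  using typing_weaken[of ctyp "[]" t T \<Gamma>] by simp

lemma closed_inv:
  "typing ctyp \<Gamma> t T \<Longrightarrow> length \<Gamma> \<le> k \<Longrightarrow> lift k t = t \<and> subst t k s = t"
  by (induction arbitrary: k s rule: typing.induct) auto

lemma apps_red: "red delta s s' \<Longrightarrow> red delta (apps s ps) (apps s' ps)"
  by (induction ps arbitrary: s s') (auto intro: red.R_App1)

lemma apps_reds: "reds delta s s' \<Longrightarrow> reds delta (apps s ps) (apps s' ps)"
  unfolding reds_def
  by (induction rule: rtranclp_induct) (auto intro: rtranclp.rtrancl_into_rtrancl apps_red)

lemma apps_typing:
  "typing ctyp \<Gamma> f (arrows Ts U) \<Longrightarrow> length ps = length Ts \<Longrightarrow>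
   \<forall>i<length Ts. typing ctyp \<Gamma> (ps!i) (Ts!i) \<Longrightarrow> typing ctyp \<Gamma> (apps f ps) U"
proof (induction ps arbitrary: f Ts)
  case Nil then show ?case by simp
next
  case (Cons p ps)
  then obtain T Ts' where Ts: "Ts = T # Ts'" by (cases Ts) auto
  have "typing ctyp \<Gamma> (App f p) (arrows Ts' U)"
    using Cons.prems Ts by (auto intro!: typing.T_App)
  moreover have "\<forall>i<length Ts'. typing ctyp \<Gamma> (ps!i) (Ts'!i)"
    using Cons.prems(3) Ts by auto
  ultimately show ?case using Cons Ts by simp
qed

lemma reds_conv: "reds delta t u \<Longrightarrow> conv delta u t"
  unfolding reds_def conv_def
proof (induction rule: rtranclp_induct)
  case base then show ?case by simp
next
  case (step y z)
  then show ?case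
    by (rule_tac converse_rtranclp_into_rtranclp[where b=y]) auto
qed

lemma starK_typing:
  "syn_monad ctyp delta Tm unitT starT mergeT \<Longrightarrow> typing ctyp [] (starK Tm starT mergeT Xs Y)
           (TArr (arrows Xs (Tm Y)) (arrows (map Tm Xs) (Tm Y)))"
proof (induction Tm starT mergeT Xs Y rule: starK.induct)
  case (1 Tm starT mergeT Y)
  then show ?case by (auto intro!: typing.intros)
next
  case (2 Tm starT mergeT X Y)
  then show ?case by (simp add: syn_monad_def)
next
  case (3 Tm starT mergeT X1 X2 Xs Y)
  let ?F = "arrows (X1 # X2 # Xs) (Tm Y)"
  let ?G = "[Tm X2, Tm X1, ?F]"
  have K: "typing ctyp ?G (starK Tm starT mergeT (TProd X1 X2 # Xs) Y)
     (TArr (arrows (TProd X1 X2 # Xs) (Tm Y)) (arrows (map Tm (TProd X1 X2 # Xs)) (Tm Y)))"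
    using 3 typing_closed0 by blast
  have M: "typing ctyp ?G (mergeT X1 X2) (TArr (Tm X1) (TArr (Tm X2) (Tm (TProd X1 X2))))"
  proof -
    have "typing ctyp [] (mergeT X1 X2) (TArr (Tm X1) (TArr (Tm X2) (Tm (TProd X1 X2))))"
      using 3(2) unfolding syn_monad_def by simp
    then show ?thesis by (rule typing_closed0)
  qed
  have V3: "typing ctyp (TProd X1 X2 # ?G) (Var 3) ?F"
    by (rule typing.T_Var) auto
  have V0: "typing ctyp (TProd X1 X2 # ?G) (Var 0) (TProd X1 X2)"
    by (rule typing.T_Var) auto
  have body: "typing ctyp (TProd X1 X2 # ?G) (App (App (Var 3) (Fst (Var 0))) (Snd (Var 0)))
      (arrows Xs (Tm Y))"
    apply (rule typing.T_App[where T=X2])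
     apply (rule typing.T_App[where T=X1])
    using V3 apply simp
     apply (rule typing.T_Fst[OF V0])
    apply (rule typing.T_Snd[OF V0])
    done
  have r': "typing ctyp ?G (Lam (TProd X1 X2) (App (App (Var 3) (Fst (Var 0))) (Snd (Var 0))))
      (arrows (TProd X1 X2 # Xs) (Tm Y))"
    using body by (auto intro: typing.T_Lam)
  have m: "typing ctyp ?G (App (App (mergeT X1 X2) (Var 1)) (Var 0)) (Tm (TProd X1 X2))"
    apply (rule typing.T_App[where T="Tm X2"])
     apply (rule typing.T_App[where T="Tm X1"])
      apply (rule M)
     apply (rule typing.T_Var; simp)
    apply (rule typing.T_Var; simp)
    done
  have "typing ctyp ?G (App (App (starK Tm starT mergeT (TProd X1 X2 # Xs) Y)
                 (Lam (TProd X1 X2) (App (App (Var 3) (Fst (Var 0))) (Snd (Var 0)))))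
            (App (App (mergeT X1 X2) (Var 1)) (Var 0))) (arrows (map Tm Xs) (Tm Y))"
    apply (rule typing.T_App[OF _ m])
    using typing.T_App[OF K r'] by simp
  then show ?case by (auto intro!: typing.T_Lam)
qed

lemma main_aux:
  fixes ctyp :: "'c \<Rightarrow> ty" and delta :: "'c trm \<Rightarrow> 'c trm \<Rightarrow> bool"
    and interp :: "'p \<Rightarrow> nat list \<Rightarrow> bool" and Tm :: "ty \<Rightarrow> ty"
    and unitT :: "ty \<Rightarrow> 'c trm" and starT mergeT :: "ty \<Rightarrow> ty \<Rightarrow> 'c trm"
    and realM real :: "'c trm \<Rightarrow> 'p fm \<Rightarrow> bool" and B :: "'p fm"
  assumes monad: "syn_monad ctyp delta Tm unitT starT mergeT"
    and rel: "monadic_real ctyp delta interp Tm unitT starT mergeT realM real"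
    and closedB: "closed_fm B"
  shows "\<forall>As r. length As = n \<longrightarrow> (\<forall>A\<in>set As. closed_fm A) \<longrightarrow>
    typing ctyp [] r (arrows (map (tyA Tm) As) (Tm (tyA Tm B))) \<longrightarrow>
    (\<forall>ps. length ps = length As \<longrightarrow>
                   (\<forall>i<length As. typing ctyp [] (ps ! i) (tyA Tm (As ! i)) \<and> real (ps ! i) (As ! i))
                   \<longrightarrow> realM (apps r ps) B) \<longrightarrow>
    (\<forall>qs. length qs = length As \<longrightarrow>
           (\<forall>i<length As. typing ctyp [] (qs ! i) (Tm (tyA Tm (As ! i))) \<and> realM (qs ! i) (As ! i))
           \<longrightarrow> realM (apps (starK Tm starT mergeT (map (tyA Tm) As) (tyA Tm B)) (r # qs)) B)"
proof -
  note R = rel[unfolded monadic_real_def]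
  have Rty: "\<And>r A. real r A \<Longrightarrow> closed_fm A \<and> typing ctyp [] r (tyA Tm A)"
    using R[THEN conjunct1] by blast
  have RMty: "\<And>r A. realM r A \<Longrightarrow> closed_fm A \<and> typing ctyp [] r (Tm (tyA Tm A))"
    using R[THEN conjunct2, THEN conjunct1] by blast
  have RMconv: "\<And>r r' A. realM r A \<Longrightarrow> conv delta r r' \<Longrightarrow> typing ctyp [] r' (Tm (tyA Tm A)) \<Longrightarrow> realM r' A"
    using R[THEN conjunct2, THEN conjunct2, THEN conjunct2, THEN conjunct1] by blast
  have Rdef: "\<forall>r A. closed_fm A \<longrightarrow> typing ctyp [] r (tyA Tm A) \<longrightarrow>
        (real r A \<longleftrightarrow>
          (case A of
             FAtom p ts \<Rightarrow> reds delta r UnitC \<and> interp p (map aval ts)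
           | FBot \<Rightarrow> reds delta r UnitC \<and> False
           | FAnd B C \<Rightarrow> real (Fst r) B \<and> real (Snd r) C
           | FOr B C \<Rightarrow> (\<exists>a. reds delta r (Inl (tyA Tm C) a) \<and> real a B) \<or>
                        (\<exists>b. reds delta r (Inr (tyA Tm B) b) \<and> real b C)
           | FImp B C \<Rightarrow> (\<forall>p. real p B \<longrightarrow> realM (App r p) C)
           | FAll x B \<Rightarrow> (\<forall>n. realM (App r (num n)) (fsubst x n B))
           | FEx x B \<Rightarrow> (\<exists>n. reds delta (Fst r) (num n) \<and> real (Snd r) (fsubst x n B))))"
    using R[THEN conjunct2, THEN conjunct2, THEN conjunct2, THEN conjunct2, THEN conjunct1] by blast
  have realAnd: "\<And>p A1 A2. real p (FAnd A1 A2) \<Longrightarrow> real (Fst p) A1 \<and> real (Snd p) A2"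
  proof -
    fix p A1 A2 assume h: "real p (FAnd A1 A2)"
    from Rty[OF h] Rdef[rule_format, of "FAnd A1 A2" p] h
    show "real (Fst p) A1 \<and> real (Snd p) A2" by simp
  qed
  have realImp: "\<And>r A C. closed_fm A \<Longrightarrow> closed_fm C \<Longrightarrow> typing ctyp [] r (TArr (tyA Tm A) (Tm (tyA Tm C)))
     \<Longrightarrow> (\<forall>p. real p A \<longrightarrow> realM (App r p) C) \<Longrightarrow> real r (FImp A C)"
  proof -
    fix r A C assume h: "closed_fm A" "closed_fm C" "typing ctyp [] r (TArr (tyA Tm A) (Tm (tyA Tm C)))"
      "\<forall>p. real p A \<longrightarrow> realM (App r p) C"
    then show "real r (FImp A C)" using Rdef[rule_format, of "FImp A C" r]
      by (simp add: closed_fm_def)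
  qed
  have MR2: "\<And>r p A C. real r (FImp A C) \<Longrightarrow> realM p A \<Longrightarrow>
        realM (App (App (starT (tyA Tm A) (tyA Tm C)) r) p) C"
    using R[THEN conjunct2, THEN conjunct2, THEN conjunct2, THEN conjunct2, THEN conjunct2, THEN conjunct2, THEN conjunct1] by blast
  have MR3: "\<And>p q A C. realM p A \<Longrightarrow> realM q C \<Longrightarrow>
        realM (App (App (mergeT (tyA Tm A) (tyA Tm C)) p) q) (FAnd A C)"
    using R[THEN conjunct2, THEN conjunct2, THEN conjunct2, THEN conjunct2, THEN conjunct2, THEN conjunct2, THEN conjunct2] by blast
  have redsI: "\<And>t u. red delta t u \<Longrightarrow> reds delta t u"
    unfolding reds_def by blast
  show ?thesis
  proof (induction n)
    case 0
    show ?case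
    proof (intro allI impI)
      fix As :: "'p fm list" and r :: "'c trm" and qs :: "'c trm list"
      assume h: "length As = 0" "\<forall>A\<in>set As. closed_fm A"
        "typing ctyp [] r (arrows (map (tyA Tm) As) (Tm (tyA Tm B)))"
        "\<forall>ps. length ps = length As \<longrightarrow>
                   (\<forall>i<length As. typing ctyp [] (ps ! i) (tyA Tm (As ! i)) \<and> real (ps ! i) (As ! i))
                   \<longrightarrow> realM (apps r ps) B"
        "length qs = length As"
      have As: "As = []" "qs = []" using h by auto
      have rr: "realM r B" using h(4)[rule_format, of "[]"] As by simp
      have "red delta (App (Lam (Tm (tyA Tm B)) (Var 0)) r) r"
        using red.R_beta[of delta "Tm (tyA Tm B)" "Var 0" r] by simp
      then have c: "conv delta r (App (Lam (Tm (tyA Tm B)) (Var 0)) r)"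
        by (intro reds_conv redsI)
      have t: "typing ctyp [] (App (Lam (Tm (tyA Tm B)) (Var 0)) r) (Tm (tyA Tm B))"
        using h(3) As by (auto intro!: typing.intros)
      show "realM (apps (starK Tm starT mergeT (map (tyA Tm) As) (tyA Tm B)) (r # qs)) B"
        using RMconv[OF rr c t] As by simp
    qed
  next
    case (Suc n)
    show ?case
    proof (intro allI impI)
      fix As :: "'p fm list" and r :: "'c trm" and qs :: "'c trm list"
      assume h: "length As = Suc n" "\<forall>A\<in>set As. closed_fm A"
        "typing ctyp [] r (arrows (map (tyA Tm) As) (Tm (tyA Tm B)))"
        "\<forall>ps. length ps = length As \<longrightarrow>
                   (\<forall>i<length As. typing ctyp [] (ps ! i) (tyA Tm (As ! i)) \<and> real (ps ! i) (As ! i))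
                   \<longrightarrow> realM (apps r ps) B"
        "length qs = length As"
        "\<forall>i<length As. typing ctyp [] (qs ! i) (Tm (tyA Tm (As ! i))) \<and> realM (qs ! i) (As ! i)"
      obtain A1 As' where As: "As = A1 # As'" using h(1) by (cases As) auto
      show "realM (apps (starK Tm starT mergeT (map (tyA Tm) As) (tyA Tm B)) (r # qs)) B"
      proof (cases As')
        case Nil
        obtain q where qs: "qs = [q]" using h(5) As Nil by (cases qs) auto
        have rI: "real r (FImp A1 B)"
        proof (rule realImp)
          show "closed_fm A1" using h(2) As by simp
          show "closed_fm B" by (rule closedB)
          show "typing ctyp [] r (TArr (tyA Tm A1) (Tm (tyA Tm B)))" using h(3) As Nil by simp
          show "\<forall>p. real p A1 \<longrightarrow> realM (App r p) B"
          proof (intro allI impI)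
            fix p assume "real p A1"
            then show "realM (App r p) B" using h(4)[rule_format, of "[p]"] As Nil Rty by auto
          qed
        qed
        have "realM q A1" using h(6) As Nil qs by auto
        from MR2[OF rI this] show ?thesis using As Nil qs by simp
      next
        case (Cons A2 As'')
        let ?X1 = "tyA Tm A1" and ?X2 = "tyA Tm A2" and ?Xs = "map (tyA Tm) As''" and ?Y = "tyA Tm B"
        obtain q1 q2 qs'' where qs: "qs = q1 # q2 # qs''"
          using h(5) As Cons by (cases qs; cases "tl qs") auto
        let ?r' = "Lam (TProd ?X1 ?X2) (App (App r (Fst (Var 0))) (Snd (Var 0)))"
        let ?m = "App (App (mergeT ?X1 ?X2) q1) q2"
        let ?K = "starK Tm starT mergeT (TProd ?X1 ?X2 # ?Xs) ?Y"
        let ?M = "mergeT ?X1 ?X2"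
        have rty: "typing ctyp [] r (arrows (?X1 # ?X2 # ?Xs) (Tm ?Y))" using h(3) As Cons by simp
        have q1ty: "typing ctyp [] q1 (Tm ?X1)" and q1r: "realM q1 A1"
          using h(6)[rule_format, of 0] As Cons qs by auto
        have q2ty: "typing ctyp [] q2 (Tm ?X2)" and q2r: "realM q2 A2"
          using h(6)[rule_format, of 1] As Cons qs by auto
        have Kty: "typing ctyp [] ?K (TArr (arrows (TProd ?X1 ?X2 # ?Xs) (Tm ?Y))
                     (arrows (map Tm (TProd ?X1 ?X2 # ?Xs)) (Tm ?Y)))"
          by (rule starK_typing[OF monad])
        have Mty: "typing ctyp [] ?M (TArr (Tm ?X1) (TArr (Tm ?X2) (Tm (TProd ?X1 ?X2))))"
          using monad unfolding syn_monad_def by simp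
        have cr: "\<And>k s. lift k r = r" "\<And>k s. subst r k s = r" using closed_inv[OF rty] by auto
        have cq1: "\<And>k s. lift k q1 = q1" "\<And>k s. subst q1 k s = q1" using closed_inv[OF q1ty] by auto
        have cq2: "\<And>k s. lift k q2 = q2" "\<And>k s. subst q2 k s = q2" using closed_inv[OF q2ty] by auto
        have cK: "\<And>k s. lift k ?K = ?K" "\<And>k s. subst ?K k s = ?K" using closed_inv[OF Kty] by auto
        have cM: "\<And>k s. lift k ?M = ?M" "\<And>k s. subst ?M k s = ?M" using closed_inv[OF Mty] by auto
        note cl = cr cq1 cq2 cK cM
        have r'ty: "typing ctyp [] ?r' (arrows (TProd ?X1 ?X2 # ?Xs) (Tm ?Y))"
        proof -
          have V0: "typing ctyp [TProd ?X1 ?X2] (Var 0) (TProd ?X1 ?X2)"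
            by (rule typing.T_Var) auto
          have r1: "typing ctyp [TProd ?X1 ?X2] r (arrows (?X1 # ?X2 # ?Xs) (Tm ?Y))"
            using typing_closed0[OF rty] .
          have "typing ctyp [TProd ?X1 ?X2] (App (App r (Fst (Var 0))) (Snd (Var 0))) (arrows ?Xs (Tm ?Y))"
            apply (rule typing.T_App[where T="?X2"])
             apply (rule typing.T_App[where T="?X1"])
            using r1 apply simp
             apply (rule typing.T_Fst[OF V0])
            apply (rule typing.T_Snd[OF V0])
            done
          then show ?thesis by (auto intro: typing.T_Lam)
        qed
        have mty: "typing ctyp [] ?m (Tm (TProd ?X1 ?X2))"
          by (rule typing.T_App[OF typing.T_App[OF Mty q1ty] q2ty])
        have mr: "realM ?m (FAnd A1 A2)" using MR3[OF q1r q2r] .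
        have IHres0: "realM (apps (starK Tm starT mergeT (map (tyA Tm) (FAnd A1 A2 # As'')) (tyA Tm B)) (?r' # ?m # qs'')) B"
        proof -
          have f1: "length (FAnd A1 A2 # As'') = n" using h(1) As Cons by simp
          have f2: "\<forall>A\<in>set (FAnd A1 A2 # As''). closed_fm A" using h(2) As Cons by (auto simp: closed_fm_def)
          have f3: "typing ctyp [] ?r' (arrows (map (tyA Tm) (FAnd A1 A2 # As'')) (Tm (tyA Tm B)))"
            using r'ty by simp
          have f5: "length (?m # qs'') = length (FAnd A1 A2 # As'')" using h(5) As Cons qs by simp
          have f6: "\<forall>i<length (FAnd A1 A2 # As''). typing ctyp [] ((?m # qs'') ! i) (Tm (tyA Tm ((FAnd A1 A2 # As'') ! i)))
              \<and> realM ((?m # qs'') ! i) ((FAnd A1 A2 # As'') ! i)"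
          proof (intro allI impI)
            fix i assume i: "i < length (FAnd A1 A2 # As'')"
            show "typing ctyp [] ((?m # qs'') ! i) (Tm (tyA Tm ((FAnd A1 A2 # As'') ! i)))
              \<and> realM ((?m # qs'') ! i) ((FAnd A1 A2 # As'') ! i)"
            proof (cases i)
              case 0 then show ?thesis using mty mr by simp
            next
              case (Suc j)
              then show ?thesis using h(6)[rule_format, of "Suc (Suc j)"] i As Cons qs by simp
            qed
          qed
          have f4: "\<forall>ps. length ps = length (FAnd A1 A2 # As'') \<longrightarrow>
             (\<forall>i<length (FAnd A1 A2 # As''). typing ctyp [] (ps ! i) (tyA Tm ((FAnd A1 A2 # As'') ! i)) \<and>
                 real (ps ! i) ((FAnd A1 A2 # As'') ! i)) \<longrightarrow>
             realM (apps ?r' ps) B"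
          proof (intro allI impI)
            fix ps :: "'c trm list"
            assume l: "length ps = length (FAnd A1 A2 # As'')"
              and hp: "\<forall>i<length (FAnd A1 A2 # As''). typing ctyp [] (ps ! i) (tyA Tm ((FAnd A1 A2 # As'') ! i)) \<and>
                 real (ps ! i) ((FAnd A1 A2 # As'') ! i)"
            obtain p0 ps' where ps: "ps = p0 # ps'" using l by (cases ps) auto
            have p0ty: "typing ctyp [] p0 (TProd ?X1 ?X2)" and p0r: "real p0 (FAnd A1 A2)"
              using hp[rule_format, of 0] ps by auto
            have fr: "real (Fst p0) A1" "real (Snd p0) A2" using realAnd[OF p0r] by auto
            have target: "realM (apps r (Fst p0 # Snd p0 # ps')) B"
            proof -
              have g1: "length (Fst p0 # Snd p0 # ps') = length As" using l ps As Cons by simp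
              have g2: "\<forall>i<length As. typing ctyp [] ((Fst p0 # Snd p0 # ps') ! i) (tyA Tm (As ! i)) \<and>
                 real ((Fst p0 # Snd p0 # ps') ! i) (As ! i)"
              proof (intro allI impI)
                fix i assume i: "i < length As"
                show "typing ctyp [] ((Fst p0 # Snd p0 # ps') ! i) (tyA Tm (As ! i)) \<and>
                   real ((Fst p0 # Snd p0 # ps') ! i) (As ! i)"
                proof (cases i)
                  case 0 then show ?thesis using fr As typing.T_Fst[OF p0ty] by simp
                next
                  case (Suc j)
                  show ?thesis
                  proof (cases j)
                    case 0 then show ?thesis using Suc fr As Cons typing.T_Snd[OF p0ty] by simp
                  next
                    case (Suc k)
                    then show ?thesis using \<open>i = Suc j\<close> hp[rule_format, of "Suc k"] i ps As Cons by simp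
                  qed
                qed
              qed
              from mp[OF mp[OF spec[OF h(4), of "Fst p0 # Snd p0 # ps'"] g1] g2] show ?thesis .
            qed
            have "red delta (App ?r' p0) (App (App r (Fst p0)) (Snd p0))"
              using red.R_beta[of delta "TProd ?X1 ?X2" "App (App r (Fst (Var 0))) (Snd (Var 0))" p0]
              by (simp add: cl)
            then have "reds delta (apps ?r' ps) (apps r (Fst p0 # Snd p0 # ps'))"
              using apps_red[of delta "App ?r' p0" _ ps'] ps by (simp add: redsI)
            then have c: "conv delta (apps r (Fst p0 # Snd p0 # ps')) (apps ?r' ps)" by (rule reds_conv)
            have t: "typing ctyp [] (apps ?r' ps) (Tm (tyA Tm B))"
            proof (rule apps_typing[where Ts="map (tyA Tm) (FAnd A1 A2 # As'')"])
              show "typing ctyp [] ?r' (arrows (map (tyA Tm) (FAnd A1 A2 # As'')) (Tm (tyA Tm B)))"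
                using r'ty by simp
              show "length ps = length (map (tyA Tm) (FAnd A1 A2 # As''))" using l by simp
              show "\<forall>i<length (map (tyA Tm) (FAnd A1 A2 # As'')). typing ctyp [] (ps ! i) (map (tyA Tm) (FAnd A1 A2 # As'') ! i)"
                using hp by (auto simp: nth_Cons split: nat.split)
            qed
            show "realM (apps ?r' ps) B" using RMconv[OF target c t] .
          qed
          note IHall = Suc.IH[THEN spec[of _ "FAnd A1 A2 # As''"], THEN spec[of _ ?r']]
          note IH2 = mp[OF mp[OF mp[OF mp[OF IHall f1] f2] f3] f4]
          from mp[OF mp[OF spec[OF IH2, of "?m # qs''"] f5] f6] show ?thesis .
        qed
        have IHres: "realM (apps ?K (?r' # ?m # qs'')) B" using IHres0 by simp
        let ?L = "Lam (arrows (?X1 # ?X2 # ?Xs) (Tm ?Y)) (Lam (Tm ?X1) (Lam (Tm ?X2)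
           (App (App ?K (Lam (TProd ?X1 ?X2) (App (App (Var 3) (Fst (Var 0))) (Snd (Var 0)))))
              (App (App ?M (Var 1)) (Var 0)))))"
        let ?L1 = "Lam (Tm ?X1) (Lam (Tm ?X2) (App (App ?K ?r') (App (App ?M (Var 1)) (Var 0))))"
        let ?L2 = "Lam (Tm ?X2) (App (App ?K ?r') (App (App ?M q1) (Var 0)))"
        have s1: "red delta (App ?L r) ?L1"
          by (rule beta') (simp add: cl)
        have s2: "red delta (App ?L1 q1) ?L2"
          by (rule beta') (simp add: cl)
        have s3: "red delta (App ?L2 q2) (App (App ?K ?r') ?m)"
          by (rule beta') (simp add: cl)
        have "reds delta (App (App (App ?L r) q1) q2) (App (App ?K ?r') ?m)"
          unfolding reds_def
          using red.R_App1[OF red.R_App1[OF s1], of q1 q2] red.R_App1[OF s2, of q2] s3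
          by (meson rtranclp.rtrancl_into_rtrancl rtranclp.rtrancl_refl)
        then have "reds delta (apps (starK Tm starT mergeT (map (tyA Tm) As) (tyA Tm B)) (r # qs))
                     (apps ?K (?r' # ?m # qs''))"
          using apps_reds[of delta _ _ qs''] As Cons qs by simp
        then have c: "conv delta (apps ?K (?r' # ?m # qs''))
              (apps (starK Tm starT mergeT (map (tyA Tm) As) (tyA Tm B)) (r # qs))"
          by (rule reds_conv)
        have t: "typing ctyp [] (apps (starK Tm starT mergeT (map (tyA Tm) As) (tyA Tm B)) (r # qs)) (Tm ?Y)"
        proof (rule apps_typing[where Ts="arrows (map (tyA Tm) As) (Tm ?Y) # map Tm (map (tyA Tm) As)"])
          show "typing ctyp [] (starK Tm starT mergeT (map (tyA Tm) As) (tyA Tm B))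
                 (arrows (arrows (map (tyA Tm) As) (Tm ?Y) # map Tm (map (tyA Tm) As)) (Tm ?Y))"
            using starK_typing[OF monad, of "map (tyA Tm) As" ?Y] by simp
          show "length (r # qs) = length (arrows (map (tyA Tm) As) (Tm ?Y) # map Tm (map (tyA Tm) As))"
            using h(5) by simp
          show "\<forall>i<length (arrows (map (tyA Tm) As) (Tm ?Y) # map Tm (map (tyA Tm) As)).
             typing ctyp [] ((r # qs) ! i) ((arrows (map (tyA Tm) As) (Tm ?Y) # map Tm (map (tyA Tm) As)) ! i)"
          proof (intro allI impI)
            fix i assume i: "i < length (arrows (map (tyA Tm) As) (Tm ?Y) # map Tm (map (tyA Tm) As))"
            show "typing ctyp [] ((r # qs) ! i) ((arrows (map (tyA Tm) As) (Tm ?Y) # map Tm (map (tyA Tm) As)) ! i)"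
            proof (cases i)
              case 0 then show ?thesis using h(3) by simp
            next
              case (Suc j) then show ?thesis using h(6)[rule_format, of j] i by simp
            qed
          qed
        qed
        show ?thesis using RMconv[OF IHres c t] .
      qed
    qed
  qed
qed

theorem mainTheorem2:
  fixes ctyp :: "'c \<Rightarrow> ty" and delta :: "'c trm \<Rightarrow> 'c trm \<Rightarrow> bool"
    and interp :: "'p \<Rightarrow> nat list \<Rightarrow> bool" and Tm :: "ty \<Rightarrow> ty"
    and unitT :: "ty \<Rightarrow> 'c trm" and starT mergeT :: "ty \<Rightarrow> ty \<Rightarrow> 'c trm"
    and realM real :: "'c trm \<Rightarrow> 'p fm \<Rightarrow> bool"
    and As :: "'p fm list" and B :: "'p fm" and r :: "'c trm"
  assumes monad: "syn_monad ctyp delta Tm unitT starT mergeT"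
    and rel: "monadic_real ctyp delta interp Tm unitT starT mergeT realM real"
    and closedA: "\<forall>A\<in>set As. closed_fm A"
    and closedB: "closed_fm B"
    and r_typ: "typing ctyp [] r (arrows (map (tyA Tm) As) (Tm (tyA Tm B)))"
    and r_real: "\<forall>ps. length ps = length As \<longrightarrow>
                   (\<forall>i<length As. typing ctyp [] (ps ! i) (tyA Tm (As ! i)) \<and> real (ps ! i) (As ! i))
                   \<longrightarrow> realM (apps r ps) B"
  shows "\<forall>qs. length qs = length As \<longrightarrow>
           (\<forall>i<length As. typing ctyp [] (qs ! i) (Tm (tyA Tm (As ! i))) \<and> realM (qs ! i) (As ! i))
           \<longrightarrow> realM (apps (starK Tm starT mergeT (map (tyA Tm) As) (tyA Tm B)) (r # qs)) B"
  using main_aux[OF monad rel closedB, of "length As"] closedA r_typ r_real by blast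

end
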